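(* Let $X$ and $Y$ be nonempty compact Hausdorff spaces, and let $E$ be a complex locally convex space with $E\neq\{0_E\}$. Suppose $T:C(X,E)\to C(Y,E)$ is a map (not assumed linear) such that $$\operatorname{Ran}(TF-TG)\subset \operatorname{Ran}(F-G)\quad\text{for all } F,G\in C(X,E).$$ Then there exists a continuous map $\varphi:Y\to X$ such that $$TF=T(1\otimes 0_E)+F\circ\varphi\quad\text{for all } F\in C(X,E).$$ In particular, if in addition $T(1\otimes 0_E)=1\otimes 0_E$, then $T$ is linear.
   Context: A locally convex space is a complex vector space with a Hausdorff topology making addition and scalar multiplication continuous and having a basis of neighborhoods of $0_E$ consisting of convex sets. $C(X,E)$ denotes the complex vector space (pointwise operations) of all continuous functions $X\to E$. For $F\in C(X,E)$, $\operatorname{Ran}(F)=\{F(x):x\in X\}$. For $f\in C(X)$ (continuous complex-valued functions on $X$) and $u\in E$, $f\otimes u:X\to E$ is the function $x\mapsto f(x)u$; thus $1\otimes 0_E$ is the constant function with value $0_E$. *)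

theory Defs
  imports "HOL-Analysis.Analysis"
begin

text \<open>A complex vector space structure on a type is given by an explicit scalar
multiplication smul (the library has no complex vector space class); the topology
of E is the type-class topology of the carrier type.\<close>

definition cconvex :: "(complex \<Rightarrow> 'e::ab_group_add \<Rightarrow> 'e) \<Rightarrow> 'e set \<Rightarrow> bool" where
  "cconvex smul V \<longleftrightarrow>
     (\<forall>x\<in>V. \<forall>y\<in>V. \<forall>t::real. 0 \<le> t \<and> t \<le> 1 \<longrightarrow>
        smul (complex_of_real t) x + smul (complex_of_real (1 - t)) y \<in> V)"

definition locally_convex_space ::
  "(complex \<Rightarrow> 'e::{ab_group_add,topological_space} \<Rightarrow> 'e) \<Rightarrow> bool" where
  "locally_convex_space smul \<longleftrightarrow>
     Vector_Spaces.vector_space smul \<and>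
     (\<forall>x y::'e. x \<noteq> y \<longrightarrow> (\<exists>U V. open U \<and> open V \<and> x \<in> U \<and> y \<in> V \<and> U \<inter> V = {})) \<and>
     continuous_on UNIV (\<lambda>p::'e \<times> 'e. fst p + snd p) \<and>
     continuous_on UNIV (\<lambda>p::complex \<times> 'e. smul (fst p) (snd p)) \<and>
     (\<forall>W. open W \<and> (0::'e) \<in> W \<longrightarrow>
        (\<exists>V. cconvex smul V \<and> 0 \<in> interior V \<and> V \<subseteq> W))"

definition CXE :: "'a topology \<Rightarrow> ('a \<Rightarrow> 'e::topological_space) set" where
  "CXE X = {F. continuous_map X euclidean F}"

definition Ran :: "'a topology \<Rightarrow> ('a \<Rightarrow> 'e) \<Rightarrow> 'e set" where
  "Ran X F = F ` topspace X"

end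

theory Submission
  imports Defs
begin


lemma lcs_vs: "locally_convex_space smul \<Longrightarrow> Vector_Spaces.vector_space smul"
  by (simp add: locally_convex_space_def)

lemma lcs_Hausdorff:
  assumes "locally_convex_space (smul :: complex \<Rightarrow> 'e::{ab_group_add,topological_space} \<Rightarrow> 'e)"
  shows "Hausdorff_space (euclidean :: 'e topology)"
  using assms unfolding locally_convex_space_def Hausdorff_space_def disjnt_def by auto

lemma lcs_add:
  assumes "locally_convex_space (smul :: complex \<Rightarrow> 'e::{ab_group_add,topological_space} \<Rightarrow> 'e)"
    and "continuous_map X euclidean F" "continuous_map X euclidean (G::_\<Rightarrow>'e)"
  shows "continuous_map X euclidean (\<lambda>x. F x + G x)"
proof -
  have c: "continuous_map (prod_topology euclidean euclidean) euclidean (\<lambda>p::'e\<times>'e. fst p + snd p)"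
    using assms(1) unfolding locally_convex_space_def by simp
  have "continuous_map X euclidean ((\<lambda>p::'e\<times>'e. fst p + snd p) \<circ> (\<lambda>x. (F x, G x)))"
    by (rule continuous_map_compose[OF continuous_map_pairedI[OF assms(2,3)] c])
  then show ?thesis by (simp add: o_def)
qed

lemma lcs_smul:
  assumes "locally_convex_space (smul :: complex \<Rightarrow> 'e::{ab_group_add,topological_space} \<Rightarrow> 'e)"
    and "continuous_map X euclidean h" "continuous_map X euclidean (F::_\<Rightarrow>'e)"
  shows "continuous_map X euclidean (\<lambda>x. smul (h x) (F x))"
proof -
  have c: "continuous_map (prod_topology euclidean euclidean) euclidean (\<lambda>p::complex\<times>'e. smul (fst p) (snd p))"
    using assms(1) unfolding locally_convex_space_def by simp
  have "continuous_map X euclidean ((\<lambda>p::complex\<times>'e. smul (fst p) (snd p)) \<circ> (\<lambda>x. (h x, F x)))"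
    by (rule continuous_map_compose[OF continuous_map_pairedI[OF assms(2,3)] c])
  then show ?thesis by (simp add: o_def)
qed

lemma lcs_diff:
  assumes "locally_convex_space (smul :: complex \<Rightarrow> 'e::{ab_group_add,topological_space} \<Rightarrow> 'e)"
    and "continuous_map X euclidean F" "continuous_map X euclidean (G::_\<Rightarrow>'e)"
  shows "continuous_map X euclidean (\<lambda>x. F x - G x)"
proof -
  interpret vs: vector_space smul using lcs_vs[OF assms(1)] .
  have "continuous_map X euclidean (\<lambda>x. F x + smul (-1) (G x))"
    by (intro lcs_add[OF assms(1)] lcs_smul[OF assms(1)] assms(2,3)) simp
  moreover have "\<And>x. smul (-1) (G x) = - G x"
    by (metis vs.scale_minus_left vs.scale_one)
  ultimately show ?thesis by simp
qed



lemma cmc_ofreal: "continuous_map X euclidean b \<Longrightarrow> continuous_map X euclidean (\<lambda>x. complex_of_real (b x))"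
  by (simp add: continuous_map_atin tendsto_of_real)
lemma cmc_mult: "continuous_map X euclidean f \<Longrightarrow> continuous_map X euclidean g \<Longrightarrow> continuous_map X euclidean (\<lambda>x. (f x::complex) * g x)"
  by (simp add: continuous_map_atin tendsto_mult)
lemma cmc_Re: "continuous_map X euclidean f \<Longrightarrow> continuous_map X euclidean (\<lambda>x. Re (f x))"
  by (simp add: continuous_map_atin tendsto_Re)
lemma cmc_Im: "continuous_map X euclidean f \<Longrightarrow> continuous_map X euclidean (\<lambda>x. Im (f x))"
  by (simp add: continuous_map_atin tendsto_Im)

lemma scalar_eval:
  fixes X :: "'a topology" and l :: "('a \<Rightarrow> complex) \<Rightarrow> complex"
  assumes cpt: "compact_space X"
   and diff: "\<And>f g. continuous_map X euclidean f \<Longrightarrow> continuous_map X euclidean g \<Longrightarrow>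
          \<exists>x\<in>topspace X. l f - l g = f x - g x"
   and l0: "l (\<lambda>x. 0) = 0"
  shows "\<exists>x0\<in>topspace X. \<forall>f. continuous_map X euclidean f \<longrightarrow> l f = f x0"
proof -
  define C where "C b = (\<lambda>x. complex_of_real (b x))" for b :: "'a \<Rightarrow> real"
  define lr where "lr b = Re (l (C b))" for b
  have cC: "continuous_map X euclidean (C b)" if "continuous_map X euclidean b" for b
    using cmc_ofreal[OF that] by (simp add: C_def)
  have ran: "\<exists>x\<in>topspace X. l f = f x" if "continuous_map X euclidean f" for f
    using diff[OF that, of "\<lambda>x. 0"] l0 by simp
  have lrC: "l (C b) = complex_of_real (lr b)" if "continuous_map X euclidean b" for b
    using ran[OF cC[OF that]] by (auto simp: C_def lr_def complex_eq_iff)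
  have ci: "continuous_map X euclidean (\<lambda>x. \<i> * C v x)" if "continuous_map X euclidean v" for v
    by (intro cmc_mult cC that) simp
  have gen: "Re (l (\<lambda>x. C u x + \<i> * C v x)) = lr u \<and> Im (l (\<lambda>x. C u x + \<i> * C v x)) = Im (l (\<lambda>x. \<i> * C v x))"
    if u: "continuous_map X euclidean u" and v: "continuous_map X euclidean v" for u v
  proof -
    have cw: "continuous_map X euclidean (\<lambda>x. C u x + \<i> * C v x)"
      by (intro continuous_map_add cC ci u v)
    obtain x where "l (\<lambda>x. C u x + \<i> * C v x) - l (C u) = (C u x + \<i> * C v x) - C u x"
      using diff[OF cw cC[OF u]] by auto
    then have 1: "Re (l (\<lambda>x. C u x + \<i> * C v x)) = lr u"
      using lrC[OF u] by (simp add: C_def complex_eq_iff)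
    obtain x where "l (\<lambda>x. C u x + \<i> * C v x) - l (\<lambda>x. \<i> * C v x) = (C u x + \<i> * C v x) - \<i> * C v x"
      using diff[OF cw ci[OF v]] by auto
    then have 2: "Im (l (\<lambda>x. C u x + \<i> * C v x)) = Im (l (\<lambda>x. \<i> * C v x))"
      by (simp add: C_def complex_eq_iff)
    show ?thesis using 1 2 by simp
  qed
  have iv: "Im (l (\<lambda>x. \<i> * C v x)) = lr v" if v: "continuous_map X euclidean v" for v
  proof -
    have cw: "continuous_map X euclidean (\<lambda>x. C v x + \<i> * C v x)"
      by (intro continuous_map_add cC ci v)
    obtain x where "l (\<lambda>x. C v x + \<i> * C v x) = C v x + \<i> * C v x"
      using ran[OF cw] by auto
    then have "Re (l (\<lambda>x. C v x + \<i> * C v x)) = Im (l (\<lambda>x. C v x + \<i> * C v x))"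
      by (simp add: C_def)
    then show ?thesis using gen[OF v v] by simp
  qed
  have pair: "l (\<lambda>x. C u x + \<i> * C v x) = complex_of_real (lr u) + \<i> * complex_of_real (lr v)"
    if u: "continuous_map X euclidean u" and v: "continuous_map X euclidean v" for u v
    using gen[OF u v] iv[OF v] by (simp add: complex_eq_iff)
  have pairpt: "\<exists>x\<in>topspace X. u x = lr u \<and> v x = lr v"
    if u: "continuous_map X euclidean u" and v: "continuous_map X euclidean v" for u v
  proof -
    have cw: "continuous_map X euclidean (\<lambda>x. C u x + \<i> * C v x)"
      by (intro continuous_map_add cC ci u v)
    obtain x where "x \<in> topspace X" "l (\<lambda>x. C u x + \<i> * C v x) = C u x + \<i> * C v x"
      using ran[OF cw] by auto
    then show ?thesis using pair[OF u v] by (auto simp: C_def complex_eq_iff)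
  qed
  have absz: "lr (\<lambda>x. \<bar>b x\<bar>) = 0" if b: "continuous_map X euclidean b" "lr b = 0" for b
    using pairpt[OF b(1) continuous_map_real_abs[OF b(1)]] b(2) by auto
  have maxz: "lr (\<lambda>x. max (p x) (q x)) = 0"
    if p: "continuous_map X euclidean p" "lr p = 0" and q: "continuous_map X euclidean q" "lr q = 0" for p q
  proof -
    define m where "m = (\<lambda>x. max (p x) (q x))"
    have cm: "continuous_map X euclidean m" unfolding m_def by (intro continuous_map_real_max p q)
    have c1: "continuous_map X euclidean (\<lambda>x. C p x + \<i> * C q x)"
      by (intro continuous_map_add cC ci p q)
    have c2: "continuous_map X euclidean (\<lambda>x. C m x + \<i> * C m x)"
      by (intro continuous_map_add cC ci cm)
    obtain x where "l (\<lambda>x. C p x + \<i> * C q x) - l (\<lambda>x. C m x + \<i> * C m x)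
        = (C p x + \<i> * C q x) - (C m x + \<i> * C m x)"
      using diff[OF c1 c2] by auto
    then have "- lr m = p x - m x" "- lr m = q x - m x"
      using pair[OF p(1) q(1)] pair[OF cm cm] p(2) q(2) by (auto simp: C_def complex_eq_iff)
    then show ?thesis unfolding m_def[symmetric] by (auto simp: m_def max_def split: if_splits)
  qed
  define U where "U = {{x\<in>topspace X. b x = 0} | b. continuous_map X euclidean b \<and> lr b = 0}"
  have fin: "\<exists>b. continuous_map X euclidean b \<and> lr b = 0 \<and> {x\<in>topspace X. b x = 0} \<subseteq> \<Inter>F"
    if "finite F" "F \<subseteq> U" for F
    using that
  proof (induction F rule: finite_induct)
    case empty
    have "lr (\<lambda>x. 0) = 0" using l0 by (simp add: lr_def C_def)
    then show ?case by (intro exI[of _ "\<lambda>x. 0"]) auto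
  next
    case (insert A F)
    then obtain b where b: "continuous_map X euclidean b" "lr b = 0" "{x\<in>topspace X. b x = 0} \<subseteq> \<Inter>F"
      by auto
    from insert obtain c where c: "continuous_map X euclidean c" "lr c = 0" "A = {x\<in>topspace X. c x = 0}"
      by (auto simp: U_def)
    show ?case
      apply (intro exI[of _ "\<lambda>x. max \<bar>b x\<bar> \<bar>c x\<bar>"] conjI)
        apply (intro continuous_map_real_max continuous_map_real_abs b c)
       apply (intro maxz continuous_map_real_abs absz b c)
      using b(3) c(3) by auto
  qed
  have fip1: "\<forall>C\<in>U. closedin X C"
    proof
      fix A assume "A \<in> U"
      then have "\<exists>b::'a\<Rightarrow>real. continuous_map X euclidean b \<and> A = {x\<in>topspace X. b x = 0}"
        unfolding U_def by auto
      then obtain b :: "'a \<Rightarrow> real" where b: "continuous_map X euclidean b" "A = {x\<in>topspace X. b x = 0}"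
        by blast
      have "closedin X {x \<in> topspace X. b x \<in> {0}}"
        by (rule closedin_continuous_map_preimage[OF b(1)]) simp
      then show "closedin X A" unfolding b(2) by simp
    qed
  have fip2: "\<forall>F. finite F \<and> F \<subseteq> U \<longrightarrow> \<Inter>F \<noteq> {}"
    proof (intro allI impI)
      fix F assume "finite F \<and> F \<subseteq> U"
      then obtain b where b: "continuous_map X euclidean b" "lr b = 0" "{x\<in>topspace X. b x = 0} \<subseteq> \<Inter>F"
        using fin by blast
      obtain x where "x \<in> topspace X" "l (C b) = C b x" using ran[OF cC[OF b(1)]] by auto
      then have "x \<in> {x\<in>topspace X. b x = 0}" using lrC[OF b(1)] b(2) by (simp add: C_def)
      then show "\<Inter>F \<noteq> {}" using b(3) by blast
    qed
  have "\<Inter>U \<noteq> {}"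
    using cpt fip1 fip2 unfolding compact_space_fip by blast
  then obtain x0 where x0: "x0 \<in> \<Inter>U" by auto
  have "topspace X \<in> U"
    using l0 by (auto simp: U_def lr_def C_def intro!: exI[of _ "\<lambda>x. 0"])
  then have x0t: "x0 \<in> topspace X" using x0 by auto
  have zero: "b x0 = 0" if "continuous_map X euclidean b" "lr b = 0" for b
    using x0 that by (auto simp: U_def)
  show ?thesis
  proof (intro bexI[OF _ x0t] allI impI)
    fix f :: "'a \<Rightarrow> complex" assume f: "continuous_map X euclidean f"
    define g where "g = (\<lambda>x. f x - l f)"
    have cg: "continuous_map X euclidean g" unfolding g_def by (intro continuous_map_diff f) simp
    obtain x where "l f - l g = f x - g x" using diff[OF f cg] by auto
    then have lg: "l g = 0" by (simp add: g_def)
    have cu: "continuous_map X euclidean (\<lambda>x. Re (g x))" by (rule cmc_Re[OF cg])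
    have cv: "continuous_map X euclidean (\<lambda>x. Im (g x))" by (rule cmc_Im[OF cg])
    have geq: "(\<lambda>x. C (\<lambda>x. Re (g x)) x + \<i> * C (\<lambda>x. Im (g x)) x) = g"
      by (auto simp: C_def complex_eq_iff)
    have "lr (\<lambda>x. Re (g x)) = 0" "lr (\<lambda>x. Im (g x)) = 0"
      using pair[OF cu cv] lg unfolding geq by (auto simp: complex_eq_iff)
    then have "g x0 = 0" using zero[OF cu] zero[OF cv] by (simp add: complex_eq_iff)
    then show "l f = f x0" by (simp add: g_def)
  qed
qed



lemma lcs_open_compl:
  assumes "locally_convex_space (smul :: complex \<Rightarrow> 'e::{ab_group_add,topological_space} \<Rightarrow> 'e)"
  shows "open (- {e::'e})"
proof -
  have "closedin euclidean {e}"
    by (rule closedin_Hausdorff_singleton[OF lcs_Hausdorff[OF assms]]) simp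
  then show ?thesis by (simp add: closed_closedin[symmetric] open_Compl)
qed

lemma line_bounded:
  assumes lcs: "locally_convex_space (smul :: complex \<Rightarrow> 'e::{ab_group_add,topological_space} \<Rightarrow> 'e)"
    and K: "compact K" and e: "e \<noteq> 0"
  shows "\<exists>R\<ge>0. \<forall>c. smul c e \<in> K \<longrightarrow> norm c \<le> R"
proof -
  interpret vs: vector_space smul using lcs_vs[OF lcs] .
  define g where "g = (\<lambda>p::complex\<times>'e. smul (fst p) (snd p))"
  have cg: "continuous_on UNIV g" using lcs unfolding locally_convex_space_def g_def by blast
  have oW: "open (g -` (- {e}))"
    by (rule continuous_imp_open_vimage[OF cg]) (auto simp: lcs_open_compl[OF lcs])
  have "{0} \<times> K \<subseteq> g -` (- {e})" using e by (auto simp: g_def)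
  then obtain X0 where X0: "0 \<in> X0" "open X0" "X0 \<times> K \<subseteq> g -` (- {e})"
    using Elementary_Topology.tube_lemma[OF K oW] by blast
  then obtain d where d: "d > 0" "ball 0 d \<subseteq> X0" using open_contains_ball by blast
  show ?thesis
  proof (intro exI[of _ "1/d"] conjI allI impI)
    show "0 \<le> 1/d" using d by simp
    fix c assume c: "smul c e \<in> K"
    show "norm c \<le> 1/d"
    proof (rule ccontr)
      assume "\<not> norm c \<le> 1/d"
      then have nc: "norm c > 1/d" by simp
      then have c0: "c \<noteq> 0" using d by (metis divide_pos_pos norm_zero not_less_iff_gr_or_eq zero_less_one)
      have "1 / norm c < d" using nc d
        by (metis divide_less_eq mult.commute zero_less_divide_1_iff zero_less_norm_iff c0)
      then have "norm (1/c) < d" by (simp add: norm_divide)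
      then have "1/c \<in> X0" using d by auto
      then have "(1/c, smul c e) \<in> g -` (- {e})" using X0(3) c by blast
      then show False using c0 by (simp add: g_def)
    qed
  qed
qed



lemma point_rep:
  fixes X :: "'a topology" and smul :: "complex \<Rightarrow> 'e::{ab_group_add,topological_space} \<Rightarrow> 'e"
    and L :: "('a \<Rightarrow> 'e) \<Rightarrow> 'e" and e :: 'e
  assumes lcs: "locally_convex_space smul" and e: "e \<noteq> 0"
    and cpt: "compact_space X" and haus: "Hausdorff_space X"
    and diff: "\<And>F G. F \<in> CXE X \<Longrightarrow> G \<in> CXE X \<Longrightarrow> \<exists>x\<in>topspace X. L F - L G = F x - G x"
    and L0: "L (\<lambda>x. 0) = 0"
  shows "\<exists>x0\<in>topspace X. \<forall>F\<in>CXE X. L F = F x0"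
proof -
  interpret vs: vector_space smul using lcs_vs[OF lcs] .
  have nX: "normal_space X" using compact_Hausdorff_or_regular_imp_normal_space cpt haus by blast
  define H where "H h = (\<lambda>x. smul (h x) e)" for h :: "'a \<Rightarrow> complex"
  have cH: "H h \<in> CXE X" if "continuous_map X euclidean h" for h
    unfolding H_def CXE_def using lcs_smul[OF lcs that, of "\<lambda>x. e"] by simp
  have c0: "(\<lambda>x. 0) \<in> CXE X" by (simp add: CXE_def)
  have exl: "\<exists>c. L (H h) = smul c e" if "continuous_map X euclidean h" for h
    using diff[OF cH[OF that] c0] L0 by (auto simp: H_def)
  define l where "l h = (SOME c. L (H h) = smul c e)" for h
  have lH: "L (H h) = smul (l h) e" if "continuous_map X euclidean h" for h
    unfolding l_def using someI_ex[OF exl[OF that]] .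
  have "\<exists>x0\<in>topspace X. \<forall>f. continuous_map X euclidean f \<longrightarrow> l f = f x0"
  proof (rule scalar_eval[OF cpt])
    fix f g :: "'a \<Rightarrow> complex"
    assume f: "continuous_map X euclidean f" and g: "continuous_map X euclidean g"
    obtain x where x: "x \<in> topspace X" "L (H f) - L (H g) = H f x - H g x"
      using diff[OF cH[OF f] cH[OF g]] by auto
    have "L (H f) - L (H g) = smul (l f - l g) e" by (simp add: lH f g vs.scale_left_diff_distrib)
    moreover have "H f x - H g x = smul (f x - g x) e" by (simp add: H_def vs.scale_left_diff_distrib)
    ultimately have "smul (l f - l g) e = smul (f x - g x) e" using x(2) by metis
    then show "\<exists>x\<in>topspace X. l f - l g = f x - g x" using x(1) e by auto
  next
    have "H (\<lambda>x. 0) = (\<lambda>x. 0)" by (simp add: H_def)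
    then have "smul (l (\<lambda>x. 0)) e = 0" using lH[of "\<lambda>x. 0"] L0 by simp
    then show "l (\<lambda>x. 0) = 0" using e by simp
  qed
  then obtain x0 where x0: "x0 \<in> topspace X" and lx0: "\<And>f. continuous_map X euclidean f \<Longrightarrow> l f = f x0"
    by blast
  have LH: "L (H h) = smul (h x0) e" if "continuous_map X euclidean h" for h
    using lH[OF that] lx0[OF that] by simp
  have key: "F x0 = 0" if F: "F \<in> CXE X" and LF: "L F = 0" for F
  proof -
    have cF: "continuous_map X euclidean F" using F by (simp add: CXE_def)
    define K where "K = F ` topspace X"
    have "compactin euclidean K" unfolding K_def
      by (rule image_compactin[OF _ cF]) (use cpt compact_space_def in blast)
    then have K: "compact K" by simp
    obtain R where R: "R \<ge> 0" "\<And>c. smul c e \<in> K \<Longrightarrow> norm c \<le> R"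
      using line_bounded[OF lcs K e] by blast
    define S where "S c = (\<lambda>s. smul (c * complex_of_real s) e) ` {-1..1}" for c
    have inS: "F x0 \<in> S c" if nc: "norm c = 2*R+1" for c
    proof (rule ccontr)
      assume nin: "F x0 \<notin> S c"
      have "continuous_map (top_of_set {-1..1}) euclidean (\<lambda>s::real. smul (c * complex_of_real s) e)"
        by (intro lcs_smul[OF lcs]) (auto intro!: continuous_intros)
      then have "compact (S c)" unfolding S_def
        by (intro compact_continuous_image) auto
      then have "closedin euclidean (S c)"
        by (intro compactin_imp_closedin[OF lcs_Hausdorff[OF lcs]]) simp
      then have "open (- S c)" by (simp add: closed_closedin[symmetric] open_Compl)
      then have oU: "openin X {x \<in> topspace X. F x \<in> - S c}"
        by (intro openin_continuous_map_preimage[OF cF]) simp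
      define U where "U = {x \<in> topspace X. F x \<in> - S c}"
      have x0U: "x0 \<in> U" using x0 nin by (simp add: U_def)
      have "closedin X {x0}" by (rule closedin_Hausdorff_singleton[OF haus x0])
      moreover have "closedin X (topspace X - U)" using oU by (simp add: U_def closedin_diff)
      moreover have "disjnt {x0} (topspace X - U)" using x0U by (simp add: disjnt_def)
      ultimately obtain u where u: "continuous_map X (top_of_set {0..1}) u" "u ` {x0} \<subseteq> {0}"
          "u ` (topspace X - U) \<subseteq> {1::real}"
        using Urysohn_lemma[OF nX, of "{x0}" "topspace X - U" 0 1] by auto
      have cu: "continuous_map X euclidean u" using u(1) by (simp add: continuous_map_in_subtopology)
      have u01: "u x \<in> {0..1}" if "x \<in> topspace X" for x
      proof -
        have "u \<in> topspace X \<rightarrow> {0..1}" using u(1) by (simp add: continuous_map_in_subtopology)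
        then show ?thesis using that by (simp add: Pi_iff)
      qed
      define h where "h x = c * complex_of_real (u x)" for x
      have ch: "continuous_map X euclidean h" unfolding h_def
        by (rule cmc_mult[OF continuous_map_canonical_const cmc_ofreal[OF cu]])
      define G where "G = (\<lambda>x. F x + H h x)"
      have cG: "G \<in> CXE X" unfolding G_def CXE_def
        using lcs_add[OF lcs cF] cH[OF ch] by (simp add: CXE_def)
      obtain x1 where x1: "x1 \<in> topspace X" "L G - L F = G x1 - F x1"
        using diff[OF cG F] by auto
      have LG: "L G = smul (h x1) e" using x1(2) LF by (simp add: G_def H_def)
      obtain x2 where x2: "x2 \<in> topspace X" "L G - L (H h) = G x2 - H h x2"
        using diff[OF cG cH[OF ch]] by auto
      have "h x0 = 0" using u(2) by (simp add: h_def)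
      then have "L G = F x2" using x2(2) LH[OF ch] by (simp add: G_def)
      then have "smul (h x1) e \<in> K" using LG x2(1) by (auto simp: K_def)
      then have n1: "norm (h x1) \<le> R" using R(2) by blast
      obtain x3 where x3: "x3 \<in> topspace X" "L G - L (\<lambda>x. 0) = G x3 - 0"
        using diff[OF cG c0] by auto
      then have Fx3: "F x3 = smul (h x1 - h x3) e"
        using LG L0 by (simp add: G_def H_def vs.scale_left_diff_distrib algebra_simps)
      also have "\<dots> = smul (c * complex_of_real (u x1 - u x3)) e"
        by (simp add: h_def algebra_simps)
      finally have "F x3 \<in> S c" unfolding S_def using u01[OF x1(1)] u01[OF x3(1)]
        by (intro image_eqI[where x="u x1 - u x3"]) auto
      then have "x3 \<in> topspace X - U" using x3(1) by (simp add: U_def)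
      then have "u x3 = 1" using u(3) by auto
      then have "F x3 = smul (h x1 - c) e" using Fx3 by (simp add: h_def)
      then have "smul (h x1 - c) e \<in> K" using x3(1) unfolding K_def by (metis image_eqI)
      then have n2: "norm (h x1 - c) \<le> R" using R(2) by blast
      have "norm c \<le> norm (h x1 - c) + norm (h x1)" by (metis norm_triangle_sub add.commute norm_minus_commute)
      then show False using n1 n2 nc by linarith
    qed
    define r where "r = 2*R+1"
    have r: "r > 0" using R(1) by (simp add: r_def)
    have n1: "norm (complex_of_real r) = 2*R+1" by (metis norm_of_real abs_of_pos r r_def)
    have n2: "norm (\<i> * complex_of_real r) = 2*R+1" using n1 by (simp add: norm_mult)
    obtain s where s: "s \<in> {-1..1}" "F x0 = smul (complex_of_real r * complex_of_real s) e"
      using inS[OF n1] unfolding S_def by blast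
    obtain t where t: "t \<in> {-1..1}" "F x0 = smul (\<i> * complex_of_real r * complex_of_real t) e"
      using inS[OF n2] unfolding S_def by blast
    have "complex_of_real r * complex_of_real s = \<i> * complex_of_real r * complex_of_real t"
      using s(2) t(2) e by simp
    then have "r * s = 0" by (simp add: complex_eq_iff)
    then show "F x0 = 0" using s(2) r by simp
  qed
  show ?thesis
  proof (intro bexI[OF _ x0] ballI)
    fix F :: "'a \<Rightarrow> 'e" assume F: "F \<in> CXE X"
    define G where "G = (\<lambda>x. F x - L F)"
    have cG: "G \<in> CXE X" using F lcs_diff[OF lcs, of X F "\<lambda>x. L F"] unfolding G_def CXE_def
      by simp
    obtain x where "L F - L G = F x - G x" using diff[OF F cG] by auto
    then have "L G = 0" by (simp add: G_def)
    then have "G x0 = 0" using key[OF cG] by simp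
    then show "L F = F x0" by (simp add: G_def)
  qed
qed



theorem theorem1p1:
  fixes X :: "'a topology" and Y :: "'b topology"
    and smul :: "complex \<Rightarrow> 'e::{ab_group_add,topological_space} \<Rightarrow> 'e"
    and T :: "('a \<Rightarrow> 'e) \<Rightarrow> ('b \<Rightarrow> 'e)"
  assumes "topspace X \<noteq> {}" "compact_space X" "Hausdorff_space X"
    and "topspace Y \<noteq> {}" "compact_space Y" "Hausdorff_space Y"
    and "locally_convex_space smul"
    and "\<exists>e::'e. e \<noteq> 0"
    and "\<forall>F\<in>CXE X. T F \<in> CXE Y"
    and "\<forall>F\<in>CXE X. \<forall>G\<in>CXE X.
           Ran Y (\<lambda>y. T F y - T G y) \<subseteq> Ran X (\<lambda>x. F x - G x)"
  shows "(\<exists>\<phi>. continuous_map Y X \<phi> \<and>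
            (\<forall>F\<in>CXE X. \<forall>y\<in>topspace Y. T F y = T (\<lambda>x. 0) y + F (\<phi> y)))
       \<and> ((\<forall>y\<in>topspace Y. T (\<lambda>x. 0) y = 0) \<longrightarrow>
            (\<forall>F\<in>CXE X. \<forall>G\<in>CXE X. \<forall>a b. \<forall>y\<in>topspace Y.
               T (\<lambda>x. smul a (F x) + smul b (G x)) y = smul a (T F y) + smul b (T G y)))"
proof -
  note lcs = assms(7)
  interpret vs: vector_space smul using lcs_vs[OF lcs] .
  obtain e :: 'e where e: "e \<noteq> 0" using assms(8) by blast
  have c0: "(\<lambda>x. 0) \<in> CXE X" by (simp add: CXE_def)
  have TY: "T F \<in> CXE Y" if "F \<in> CXE X" for F using assms(9) that by blast
  have rep: "\<exists>x0\<in>topspace X. \<forall>F\<in>CXE X. T F y = T (\<lambda>x. 0) y + F x0" if y: "y \<in> topspace Y" for y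
  proof -
    define L where "L F = T F y - T (\<lambda>x. 0) y" for F
    have "\<exists>x0\<in>topspace X. \<forall>F\<in>CXE X. L F = F x0"
    proof (rule point_rep[OF lcs e assms(2,3)])
      fix F G :: "'a \<Rightarrow> 'e" assume F: "F \<in> CXE X" and G: "G \<in> CXE X"
      have "T F y - T G y \<in> Ran Y (\<lambda>y. T F y - T G y)" using y by (simp add: Ran_def)
      then have "T F y - T G y \<in> Ran X (\<lambda>x. F x - G x)" using assms(10) F G by blast
      then obtain x where "x \<in> topspace X" "T F y - T G y = F x - G x" by (auto simp: Ran_def)
      then show "\<exists>x\<in>topspace X. L F - L G = F x - G x" by (auto simp: L_def)
    qed (simp add: L_def)
    then show ?thesis by (auto simp: L_def algebra_simps)
  qed
  define \<phi> where "\<phi> y = (SOME x0. x0 \<in> topspace X \<and> (\<forall>F\<in>CXE X. T F y = T (\<lambda>x. 0) y + F x0))" for y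
  have phi: "\<phi> y \<in> topspace X \<and> (\<forall>F\<in>CXE X. T F y = T (\<lambda>x. 0) y + F (\<phi> y))" if "y \<in> topspace Y" for y
    unfolding \<phi>_def using someI_ex[OF rep[OF that, unfolded Bex_def]] .
  have nX: "normal_space X" using compact_Hausdorff_or_regular_imp_normal_space assms(2,3) by blast
  have cont: "continuous_map Y X \<phi>"
    unfolding continuous_map_def
  proof (intro conjI allI impI)
    show "\<phi> \<in> topspace Y \<rightarrow> topspace X" using phi by blast
    fix U assume U: "openin X U"
    show "openin Y {y \<in> topspace Y. \<phi> y \<in> U}"
    proof (subst openin_subopen, intro ballI)
      fix y0 assume y0: "y0 \<in> {y \<in> topspace Y. \<phi> y \<in> U}"
      have p0: "\<phi> y0 \<in> topspace X" using phi y0 by blast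
      have "closedin X {\<phi> y0}" by (rule closedin_Hausdorff_singleton[OF assms(3) p0])
      moreover have "closedin X (topspace X - U)" using U by (simp add: closedin_diff)
      moreover have "disjnt (topspace X - U) {\<phi> y0}" using y0 by (simp add: disjnt_def)
      ultimately obtain v where v: "continuous_map X (top_of_set {0..1}) v" "v ` (topspace X - U) \<subseteq> {0}"
          "v ` {\<phi> y0} \<subseteq> {1::real}"
        using Urysohn_lemma[OF nX, of "topspace X - U" "{\<phi> y0}" 0 1] by auto
      have cv: "continuous_map X euclidean v" using v(1) by (simp add: continuous_map_in_subtopology)
      define F where "F x = smul (complex_of_real (v x)) e" for x
      have F: "F \<in> CXE X" unfolding CXE_def F_def
        using lcs_smul[OF lcs cmc_ofreal[OF cv], of "\<lambda>x. e"] by simp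
      define D where "D y = T F y - T (\<lambda>x. 0) y" for y
      have cD: "continuous_map Y euclidean D" unfolding D_def
        using lcs_diff[OF lcs, of Y "T F" "T (\<lambda>x. 0)"] TY[OF F] TY[OF c0] by (simp add: CXE_def)
      have oV: "openin Y {y \<in> topspace Y. D y \<in> - {0}}"
        by (rule openin_continuous_map_preimage[OF cD]) (simp add: lcs_open_compl[OF lcs])
      have Dy: "D y = F (\<phi> y)" if "y \<in> topspace Y" for y
        using phi[OF that] F by (simp add: D_def)
      show "\<exists>T. openin Y T \<and> y0 \<in> T \<and> T \<subseteq> {y \<in> topspace Y. \<phi> y \<in> U}"
      proof (intro exI conjI)
        show "openin Y {y \<in> topspace Y. D y \<in> - {0}}" by (rule oV)
        have "v (\<phi> y0) = 1" using v(3) by auto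
        then show "y0 \<in> {y \<in> topspace Y. D y \<in> - {0}}" using y0 Dy e by (simp add: F_def)
        show "{y \<in> topspace Y. D y \<in> - {0}} \<subseteq> {y \<in> topspace Y. \<phi> y \<in> U}"
        proof
          fix y assume "y \<in> {y \<in> topspace Y. D y \<in> - {0}}"
          then have y: "y \<in> topspace Y" "D y \<noteq> 0" by auto
          then have "v (\<phi> y) \<noteq> 0" using Dy by (auto simp: F_def)
          moreover have "\<phi> y \<in> topspace X" using phi y(1) by blast
          ultimately have "\<phi> y \<in> U" using v(2) by blast
          then show "y \<in> {y \<in> topspace Y. \<phi> y \<in> U}" using y(1) by blast
        qed
      qed
    qed
  qed
  show ?thesis
  proof (intro conjI impI)
    show "\<exists>\<phi>. continuous_map Y X \<phi> \<and> (\<forall>F\<in>CXE X. \<forall>y\<in>topspace Y. T F y = T (\<lambda>x. 0) y + F (\<phi> y))"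
      using cont phi by blast
    assume T0: "\<forall>y\<in>topspace Y. T (\<lambda>x. 0) y = 0"
    show "\<forall>F\<in>CXE X. \<forall>G\<in>CXE X. \<forall>a b. \<forall>y\<in>topspace Y.
               T (\<lambda>x. smul a (F x) + smul b (G x)) y = smul a (T F y) + smul b (T G y)"
    proof (intro ballI allI)
      fix F G :: "'a \<Rightarrow> 'e" and a b :: complex and y assume F: "F \<in> CXE X" and G: "G \<in> CXE X" and y: "y \<in> topspace Y"
      have C: "(\<lambda>x. smul a (F x) + smul b (G x)) \<in> CXE X"
        using F G unfolding CXE_def
        by (simp add: lcs_add[OF lcs] lcs_smul[OF lcs])
      show "T (\<lambda>x. smul a (F x) + smul b (G x)) y = smul a (T F y) + smul b (T G y)"
        using phi[OF y] T0 y F G C by simp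
    qed
  qed
qed

end
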